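(* Let $k$ be a field of characteristic zero and let $(A,M)$ be a finite dimensional Gorenstein local commutative $k$-algebra which is not a principal ideal algebra. Then every $k$-algebra homomorphism from $A$ into a principal ideal $k$-algebra maps the socle $\operatorname{soc}(A)=\{a\in A: aM=0\}$ to zero. In particular, there is no injective $k$-algebra homomorphism from $A$ into a principal ideal algebra.
   Context: All algebras are commutative, unital and finite dimensional over $k$. A principal ideal algebra is a finite dimensional commutative $k$-algebra in which every ideal is principal. A finite dimensional local algebra $(A,M)$ is called Gorenstein if $\dim_k\operatorname{soc}(A)=1$, where $\operatorname{soc}(A)$ is the annihilator of $M$. *)

theory Defs
  imports Complex_Main
begin

text \<open>A commutative unital k-algebra is modelled as a type 'a of class comm_ring_1
together with its structure map iota : k -> A, a unital ring homomorphism.\<close>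

definition alg_scale :: "('k \<Rightarrow> 'a::comm_ring_1) \<Rightarrow> 'k \<Rightarrow> 'a \<Rightarrow> 'a" where
  "alg_scale \<iota> c a = \<iota> c * a"

definition is_ring_hom :: "('a::comm_ring_1 \<Rightarrow> 'b::comm_ring_1) \<Rightarrow> bool" where
  "is_ring_hom f \<longleftrightarrow> f 1 = 1 \<and> (\<forall>x y. f (x + y) = f x + f y) \<and> (\<forall>x y. f (x * y) = f x * f y)"

definition k_algebra :: "('k::field \<Rightarrow> 'a::comm_ring_1) \<Rightarrow> bool" where
  "k_algebra \<iota> \<longleftrightarrow> is_ring_hom \<iota>"

definition fin_dim_algebra :: "('k::field \<Rightarrow> 'a::comm_ring_1) \<Rightarrow> bool" where
  "fin_dim_algebra \<iota> \<longleftrightarrow> k_algebra \<iota> \<and>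
     (\<exists>S. finite S \<and> module.span (alg_scale \<iota>) S = UNIV)"

definition alg_hom :: "('k::field \<Rightarrow> 'a::comm_ring_1) \<Rightarrow> ('k \<Rightarrow> 'b::comm_ring_1) \<Rightarrow> ('a \<Rightarrow> 'b) \<Rightarrow> bool" where
  "alg_hom \<iota>A \<iota>B f \<longleftrightarrow> is_ring_hom f \<and> (\<forall>c. f (\<iota>A c) = \<iota>B c)"

definition is_ideal :: "'a::comm_ring_1 set \<Rightarrow> bool" where
  "is_ideal I \<longleftrightarrow> 0 \<in> I \<and> (\<forall>x\<in>I. \<forall>y\<in>I. x + y \<in> I) \<and> (\<forall>r x. x \<in> I \<longrightarrow> r * x \<in> I)"

definition principal_ideal :: "'a::comm_ring_1 set \<Rightarrow> bool" where
  "principal_ideal I \<longleftrightarrow> (\<exists>a. I = {r * a | r. True})"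

definition maximal_ideal :: "'a::comm_ring_1 set \<Rightarrow> bool" where
  "maximal_ideal M \<longleftrightarrow> is_ideal M \<and> M \<noteq> UNIV \<and>
     (\<forall>J. is_ideal J \<and> M \<subseteq> J \<longrightarrow> J = M \<or> J = UNIV)"

definition local_algebra :: "('k::field \<Rightarrow> 'a::comm_ring_1) \<Rightarrow> 'a set \<Rightarrow> bool" where
  "local_algebra \<iota> M \<longleftrightarrow> fin_dim_algebra \<iota> \<and> maximal_ideal M \<and>
     (\<forall>N. maximal_ideal N \<longrightarrow> N = M)"

definition principal_ideal_algebra :: "('k::field \<Rightarrow> 'a::comm_ring_1) \<Rightarrow> bool" where
  "principal_ideal_algebra \<iota> \<longleftrightarrow> fin_dim_algebra \<iota> \<and>
     (\<forall>I::'a set. is_ideal I \<longrightarrow> principal_ideal I)"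

definition socle :: "'a::comm_ring_1 set \<Rightarrow> 'a set" where
  "socle M = {a. \<forall>m\<in>M. a * m = 0}"

definition gorenstein :: "('k::field \<Rightarrow> 'a::comm_ring_1) \<Rightarrow> 'a set \<Rightarrow> bool" where
  "gorenstein \<iota> M \<longleftrightarrow> local_algebra \<iota> M \<and> vector_space.dim (alg_scale \<iota>) (socle M) = 1"

end

theory Submission
  imports Defs
begin

lemma alg_scale_simp[simp]: "alg_scale \<iota> c a = \<iota> c * a"
  by (simp add: alg_scale_def)

locale kalg =
  fixes \<iota> :: "'k::field \<Rightarrow> 'a::comm_ring_1"
  assumes hom: "is_ring_hom \<iota>"
  and fin: "\<exists>S. finite S \<and> module.span (alg_scale \<iota>) S = UNIV"
begin

lemma i1[simp]: "\<iota> 1 = 1" using hom by (simp add: is_ring_hom_def)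
lemma iadd[simp]: "\<iota> (x + y) = \<iota> x + \<iota> y" using hom by (simp add: is_ring_hom_def)
lemma imult[simp]: "\<iota> (x * y) = \<iota> x * \<iota> y" using hom by (simp add: is_ring_hom_def)
lemma i0[simp]: "\<iota> 0 = 0"
proof -
  have "\<iota> (0 + 0) = \<iota> 0 + \<iota> 0" by (rule iadd)
  then show ?thesis by simp
qed
lemma iinv: "c \<noteq> 0 \<Longrightarrow> \<iota> (inverse c) * \<iota> c = 1"
  by (metis imult i1 field_class.field_inverse)

lemma vs: "vector_space (alg_scale \<iota>)"
  by unfold_locales (auto simp: algebra_simps)

sublocale vector_space "alg_scale \<iota>" by (rule vs)

definition Bas where "Bas = (SOME B. finite B \<and> independent B \<and> span B = UNIV)"

lemma Bas_ex: "\<exists>B. finite B \<and> independent B \<and> span B = UNIV"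
proof -
  obtain S where S: "finite S" "span S = UNIV" using fin by auto
  obtain B where B: "B \<subseteq> S" "independent B" "S \<subseteq> span B"
    by (rule maximal_independent_subset)
  have "span B = UNIV" using B S
    by (metis span_mono span_span subset_UNIV subset_antisym)
  moreover have "finite B" by (rule finite_subset[OF B(1) S(1)])
  ultimately show ?thesis using B by auto
qed

lemma Bas: "finite Bas \<and> independent Bas \<and> span Bas = UNIV"
  unfolding Bas_def by (rule someI_ex, rule Bas_ex)

sublocale fd: finite_dimensional_vector_space "alg_scale \<iota>" Bas
  by unfold_locales (use Bas in auto)

sublocale pr: finite_dimensional_vector_space_pair_1 "alg_scale \<iota>" Bas "alg_scale \<iota>"
  by unfold_locales


abbreviation pid :: "'a \<Rightarrow> 'a set" where "pid a \<equiv> {r * a | r. True}"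

lemma ideal_subspace: "is_ideal (I::'a set) \<Longrightarrow> subspace I"
  unfolding is_ideal_def subspace_def by auto

lemma ideal_span[simp]: "is_ideal (I::'a set) \<Longrightarrow> span I = I"
  using ideal_subspace by simp

lemma ideal_mult: "is_ideal (I::'a set) \<Longrightarrow> x \<in> I \<Longrightarrow> r * x \<in> I"
  unfolding is_ideal_def by auto

lemma ideal_add: "is_ideal (I::'a set) \<Longrightarrow> x \<in> I \<Longrightarrow> y \<in> I \<Longrightarrow> x + y \<in> I"
  unfolding is_ideal_def by auto

lemma ideal_0: "is_ideal (I::'a set) \<Longrightarrow> 0 \<in> I"
  unfolding is_ideal_def by auto

lemma ideal_diff: "is_ideal (I::'a set) \<Longrightarrow> x \<in> I \<Longrightarrow> y \<in> I \<Longrightarrow> x - y \<in> I"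
  using ideal_add[of I x "(-1) * y"] ideal_mult[of I y "-1"] by simp

lemma ideal_pid: "is_ideal (pid a)"
  unfolding is_ideal_def
proof (intro conjI allI ballI impI)
  show "0 \<in> pid a" by (rule CollectI, rule exI[of _ 0]) simp
  fix x y assume "x \<in> pid a" "y \<in> pid a"
  then obtain r s where "x = r * a" "y = s * a" by auto
  then show "x + y \<in> pid a" by (auto intro!: exI[of _ "r + s"] simp: algebra_simps)
next
  fix r x assume "x \<in> pid a"
  then obtain s where "x = s * a" by auto
  then show "r * x \<in> pid a" by (auto intro!: exI[of _ "r * s"] simp: algebra_simps)
qed

lemma pid_mem: "a \<in> pid a"
  by (rule CollectI, rule exI[of _ 1]) simp

lemma pid_sub: "is_ideal (I::'a set) \<Longrightarrow> a \<in> I \<Longrightarrow> pid a \<subseteq> I"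
  using ideal_mult by blast

lemma ideal_eq_dim: "is_ideal (I::'a set) \<Longrightarrow> is_ideal J \<Longrightarrow> I \<subseteq> J \<Longrightarrow> dim J \<le> dim I \<Longrightarrow> I = J"
  using fd.subspace_dim_equal ideal_subspace by blast

lemma dim_bound: "dim S < Suc fd.dimension"
  using fd.dim_subset_UNIV[of S] by simp

lemma ideal_UNIV: "is_ideal (I::'a set) \<Longrightarrow> 1 \<in> I \<Longrightarrow> I = UNIV"
  using ideal_mult[of I 1] by auto

lemma max_ideal_exists:
  assumes I: "is_ideal (I::'a set)" "I \<noteq> UNIV"
  shows "\<exists>N. maximal_ideal N \<and> I \<subseteq> N"
proof -
  let ?P = "\<lambda>N::'a set. is_ideal N \<and> N \<noteq> UNIV \<and> I \<subseteq> N"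
  obtain N where N: "?P N" and mx: "\<forall>J. ?P J \<longrightarrow> dim J \<le> dim N"
    using ex_has_greatest_nat[of ?P I dim "Suc fd.dimension"] I dim_bound by blast
  have "maximal_ideal N"
    unfolding maximal_ideal_def
  proof (intro conjI allI impI)
    fix J assume J: "is_ideal J \<and> N \<subseteq> J"
    show "J = N \<or> J = UNIV"
    proof (cases "J = UNIV")
      case False
      then have "?P J" using J N by auto
      then have "dim J \<le> dim N" using mx by auto
      then show ?thesis using ideal_eq_dim[of N J] J N by auto
    qed simp
  qed (use N in auto)
  then show ?thesis using N by auto
qed

end

locale localalg = kalg \<iota> for \<iota> :: "'k::field \<Rightarrow> 'a::comm_ring_1" +
  fixes M :: "'a set"
  assumes maxM: "maximal_ideal M"
  and uniq: "\<forall>N. maximal_ideal N \<longrightarrow> N = M"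
begin

lemma Mideal: "is_ideal M" using maxM by (simp add: maximal_ideal_def)

lemma one_notin: "1 \<notin> M"
  using maxM ideal_UNIV Mideal by (auto simp: maximal_ideal_def)

lemma unit: "u \<notin> M \<Longrightarrow> \<exists>v. v * u = 1"
proof (rule ccontr)
  assume u: "u \<notin> M" and nu: "\<not> (\<exists>v. v * u = 1)"
  have "pid u \<noteq> UNIV"
  proof
    assume "pid u = UNIV"
    then have "1 \<in> pid u" by simp
    then show False using nu by auto
  qed
  then obtain N where "maximal_ideal N" "pid u \<subseteq> N"
    using max_ideal_exists ideal_pid by blast
  then show False using uniq u pid_mem by blast
qed

lemma one_minus_unit: "m \<in> M \<Longrightarrow> \<exists>v. v * (1 - m) = 1"
proof -
  assume m: "m \<in> M"
  have "1 - m \<notin> M"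
  proof
    assume "1 - m \<in> M"
    then have "(1 - m) + m \<in> M" using ideal_add[OF Mideal _ m] by blast
    then show False using one_notin by simp
  qed
  then show ?thesis using unit by blast
qed

lemma M_pid_principal:
  assumes Mx: "M = pid x" and I: "is_ideal (I::'a set)"
  shows "principal_ideal I"
proof -
  let ?P = "\<lambda>j::nat. I \<subseteq> pid (x ^ j)"
  have P0: "?P 0" by (auto intro!: exI[of _ "_"]) 
  obtain j where j: "?P j" and mn: "\<forall>i. ?P i \<longrightarrow> dim (pid (x ^ j)) \<le> dim (pid (x ^ i))"
    using ex_has_least_nat[of ?P 0 "\<lambda>i. dim (pid (x ^ i))"] P0 by blast
  show ?thesis
  proof (cases "?P (Suc j)")
    case True
    then have le: "dim (pid (x ^ j)) \<le> dim (pid (x ^ Suc j))" using mn by blast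
    have sub: "pid (x ^ Suc j) \<subseteq> pid (x ^ j)"
    proof (rule pid_sub[OF ideal_pid])
      show "x ^ Suc j \<in> pid (x ^ j)" by (rule CollectI, rule exI[of _ x]) simp
    qed
    have "pid (x ^ Suc j) = pid (x ^ j)"
      using ideal_eq_dim[OF ideal_pid ideal_pid sub le] .
    then have "x ^ j \<in> pid (x ^ Suc j)" using pid_mem by blast
    then obtain r where r: "x ^ j = r * x ^ Suc j" by auto
    have "r * x \<in> M" using Mx pid_mem ideal_mult[OF ideal_pid] by auto
    then obtain v where v: "v * (1 - r * x) = 1" using one_minus_unit by blast
    have "(1 - r * x) * x ^ j = 0" using r by (simp add: algebra_simps)
    then have "x ^ j = 0" using v by (metis mult.assoc mult_1 mult_zero_right)
    then have "I = {0}" using j ideal_0[OF I] by auto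
    then have "I = pid 0" by auto
    then show ?thesis unfolding principal_ideal_def by blast
  next
    case False
    then obtain y where y: "y \<in> I" "y \<notin> pid (x ^ Suc j)" by auto
    then obtain r where r: "y = r * x ^ j" using j by auto
    have "r \<notin> M"
    proof
      assume "r \<in> M"
      then obtain r' where "r = r' * x" using Mx by auto
      then show False using y r by (auto simp: algebra_simps)
    qed
    then obtain v where v: "v * r = 1" using unit by blast
    have "x ^ j = v * y" using r v by (metis mult.assoc mult_1)
    then have "x ^ j \<in> I" using ideal_mult[OF I y(1)] by simp
    then have "I = pid (x ^ j)" using j pid_sub[OF I] by auto
    then show ?thesis unfolding principal_ideal_def by blast
  qed
qed

end


lemma hom_0: "is_ring_hom g \<Longrightarrow> g 0 = 0"
proof -
  assume h: "is_ring_hom g"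
  have "g (0 + 0) = g 0 + g 0" using h by (simp only: is_ring_hom_def)
  then show ?thesis by simp
qed

lemma hom_diff: "is_ring_hom g \<Longrightarrow> g (x - y) = g x - g y"
proof -
  assume h: "is_ring_hom g"
  have "g ((x - y) + y) = g (x - y) + g y" using h by (simp only: is_ring_hom_def)
  then show ?thesis by (simp add: algebra_simps)
qed

lemma hom_mult: "is_ring_hom g \<Longrightarrow> g (x * y) = g x * g y"
  by (simp add: is_ring_hom_def)

lemma hom_add: "is_ring_hom g \<Longrightarrow> g (x + y) = g x + g y"
  by (simp add: is_ring_hom_def)

locale goralg = localalg \<iota> M for \<iota> :: "'k::field \<Rightarrow> 'a::comm_ring_1" and M +
  assumes dsoc: "dim (socle M) = 1"
begin

lemma soc_ideal: "is_ideal (socle M)"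
  unfolding is_ideal_def socle_def by (auto simp: algebra_simps)

lemma soc_gen_ex: "\<exists>s. s \<noteq> 0 \<and> socle M = range (\<lambda>c. \<iota> c * s)"
proof -
  obtain B where B: "B \<subseteq> socle M" "independent B" "socle M \<subseteq> span B" "card B = dim (socle M)"
    using basis_exists by blast
  then obtain s where s: "B = {s}" using dsoc card_1_singletonE by metis
  have "s \<noteq> 0" using B(2) s by simp
  have "span B \<subseteq> socle M" using B(1) span_mono[OF B(1)] soc_ideal by simp
  then have "socle M = span {s}" using B(3) s by auto
  also have "\<dots> = range (\<lambda>c. \<iota> c * s)" by (simp add: span_singleton)
  finally show ?thesis using \<open>s \<noteq> 0\<close> by blast
qed

definition sg where "sg = (SOME s. s \<noteq> 0 \<and> socle M = range (\<lambda>c. \<iota> c * s))"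

lemma sg: "sg \<noteq> 0" "socle M = range (\<lambda>c. \<iota> c * sg)"
  using someI_ex[OF soc_gen_ex] unfolding sg_def by auto

lemma sg_soc: "sg \<in> socle M"
  using sg(2) by (auto intro!: image_eqI[of _ _ 1])

lemma residue: "\<exists>c. a - \<iota> c \<in> M"
proof -
  have "a * sg \<in> socle M" using ideal_mult[OF soc_ideal sg_soc] .
  then obtain c where c: "a * sg = \<iota> c * sg" using sg(2) by auto
  have "a - \<iota> c \<in> M"
  proof (rule ccontr)
    assume "a - \<iota> c \<notin> M"
    then obtain v where v: "v * (a - \<iota> c) = 1" using unit by blast
    have "(a - \<iota> c) * sg = 0" using c by (simp add: algebra_simps)
    then have "sg = 0" using v by (metis mult.assoc mult_1 mult_zero_right)
    then show False using sg(1) by simp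
  qed
  then show ?thesis by blast
qed

lemma dimM: "dim (UNIV :: 'a set) = dim M + 1"
proof -
  have "span (insert 1 M) = UNIV"
  proof (intro set_eqI iffI)
    fix a :: 'a
    obtain c where "a - \<iota> c \<in> M" using residue by blast
    then show "a \<in> span (insert 1 M)" unfolding span_breakdown_eq using Mideal by auto
  qed simp
  then have "dim (UNIV :: 'a set) = dim (insert 1 M)" by (metis dim_span)
  also have "\<dots> = dim M + 1" using fd.dim_insert[of 1 M] one_notin Mideal by simp
  finally show ?thesis .
qed

lemma pid_eq_M:
  assumes x: "x \<in> M" and ann: "\<forall>a. a * x = 0 \<longrightarrow> a \<in> socle M"
  shows "pid x = M"
proof -
  have ind: "independent {sg}" using sg(1) by simp
  obtain Bs where Bs: "{sg} \<subseteq> Bs" "independent Bs" "UNIV \<subseteq> span Bs"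
    using maximal_independent_subset_extend[OF subset_UNIV ind] by metis
  define C where "C = Bs - {sg}"
  have sC: "sg \<notin> span C"
    using Bs(1,2) unfolding C_def dependent_def by auto
  have insC: "insert sg C = Bs" using Bs(1) C_def by auto
  have "dim (UNIV :: 'a set) = dim (insert sg C)" using Bs(3) insC
    by (metis dim_span top.extremum_uniqueI)
  also have "\<dots> = dim C + 1" using fd.dim_insert[of sg C] sC by simp
  finally have d1: "dim (UNIV :: 'a set) = dim C + 1" .
  let ?phi = "\<lambda>a. a * x"
  have lin: "Vector_Spaces.linear (alg_scale \<iota>) (alg_scale \<iota>) ?phi"
    unfolding Vector_Spaces.linear_iff using vs by (simp add: algebra_simps)
  have inj: "inj_on ?phi (span (span C))"
  proof (rule inj_onI)
    fix a1 a2 assume a1: "a1 \<in> span (span C)" and a2: "a2 \<in> span (span C)" and e: "a1 * x = a2 * x"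
    then have "(a1 - a2) * x = 0" by (simp add: algebra_simps)
    then have "a1 - a2 \<in> socle M" using ann by blast
    then obtain c where c: "a1 - a2 = \<iota> c * sg" using sg(2) by auto
    show "a1 = a2"
    proof (cases "c = 0")
      case True then show ?thesis using c by simp
    next
      case False
      have "a1 - a2 \<in> span (span C)" using a1 a2 by (rule span_diff)
      then have "a1 - a2 \<in> span C" by (simp only: span_span)
      then have "alg_scale \<iota> (inverse c) (a1 - a2) \<in> span C" by (rule span_scale)
      moreover have "alg_scale \<iota> (inverse c) (a1 - a2) = sg"
        using c iinv[OF False] by (simp add: mult.assoc[symmetric])
      ultimately have "sg \<in> span C" by (simp only:)
      then show ?thesis using sC by contradiction
    qed
  qed
  have dimg: "dim (?phi ` span C) = dim (span C)"
    by (rule pr.dim_image_eq[OF lin inj])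
  have img: "?phi ` span C = pid x"
  proof (intro set_eqI iffI)
    fix y assume "y \<in> ?phi ` span C" then show "y \<in> pid x" by auto
  next
    fix y assume "y \<in> pid x"
    then obtain r where r: "y = r * x" by auto
    have "r \<in> span (insert sg C)" using Bs(3) insC by auto
    then obtain k where k: "r - \<iota> k * sg \<in> span C" unfolding span_breakdown_eq by auto
    have "sg * x = 0" using sg_soc x unfolding socle_def by auto
    then have "?phi (r - \<iota> k * sg) = y" using r
      by (simp add: algebra_simps) (metis mult.left_commute mult_zero_right)
    then show "y \<in> ?phi ` span C" using k by (metis image_eqI)
  qed
  have "dim (pid x) = dim M" using dimg img d1 dimM by simp
  then show ?thesis using ideal_eq_dim[OF ideal_pid Mideal pid_sub[OF Mideal x]] by simp
qed

lemma inj_of_soc: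
  fixes g :: "'a \<Rightarrow> 'b::comm_ring_1"
  assumes hg: "is_ring_hom g" and gs: "g sg \<noteq> 0"
  shows "inj g"
proof (rule injI, rule ccontr)
  fix a1 a2 assume e: "g a1 = g a2" and ne: "a1 \<noteq> a2"
  define a where "a = a1 - a2"
  have ga: "g a = 0" using e hom_diff[OF hg] a_def by simp
  have anz: "a \<noteq> 0" using ne a_def by simp
  let ?P = "\<lambda>b. b \<in> pid a \<and> b \<noteq> 0"
  have "?P a" using anz pid_mem by blast
  then obtain b where b: "?P b" and mn: "\<forall>b'. ?P b' \<longrightarrow> dim (pid b) \<le> dim (pid b')"
    using ex_has_least_nat[of ?P a "\<lambda>b. dim (pid b)"] by blast
  have "b \<in> socle M" unfolding socle_def
  proof (intro CollectI ballI, rule ccontr)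
    fix m assume m: "m \<in> M" and nz: "b * m \<noteq> 0"
    have "?P (m * b)" using nz b ideal_mult[OF ideal_pid, of b a m] by (simp add: mult.commute)
    then have le: "dim (pid b) \<le> dim (pid (m * b))" using mn by blast
    have sub: "pid (m * b) \<subseteq> pid b"
      by (rule pid_sub[OF ideal_pid], rule ideal_mult[OF ideal_pid pid_mem])
    have "pid (m * b) = pid b" using ideal_eq_dim[OF ideal_pid ideal_pid sub le] .
    then have "b \<in> pid (m * b)" using pid_mem by blast
    then obtain r where r: "b = r * (m * b)" by auto
    have "r * m \<in> M" using ideal_mult[OF Mideal m] .
    then obtain v where v: "v * (1 - r * m) = 1" using one_minus_unit by blast
    have "(1 - r * m) * b = 0" using r by (simp add: algebra_simps)
    then have "b = 0" using v by (metis mult.assoc mult_1 mult_zero_right)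
    then show False using b by simp
  qed
  then obtain c where c: "b = \<iota> c * sg" using sg(2) by auto
  have cnz: "c \<noteq> 0" using c b by auto
  have "sg = \<iota> (inverse c) * b" using c iinv[OF cnz] by (simp add: mult.assoc[symmetric])
  then have "sg \<in> pid a" using ideal_mult[OF ideal_pid, of b a] b by simp
  then obtain r where "sg = r * a" by auto
  then have "g sg = 0" using hom_mult[OF hg] ga by simp
  then show False using gs by simp
qed

end


context kalg
begin

lemma idiff: "\<iota> (x - y) = \<iota> x - \<iota> y"
  using hom_diff[OF hom] .

lemma key:
  assumes dist: "inj (of_nat :: nat \<Rightarrow> 'k)"
  and v: "v = p * g" and w: "w = q * g" and gdef: "g = a * v + b * w"
  shows "\<exists>c \<beta>. g = \<beta> * (v + \<iota> c * w)"
proof (rule ccontr)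
  assume H: "\<not> (\<exists>c \<beta>. g = \<beta> * (v + \<iota> c * w))"
  define e where "e = a * p + b * q"
  have "e * g = a * (p * g) + b * (q * g)" by (simp add: e_def algebra_simps)
  also have "\<dots> = g" by (simp only: v[symmetric] w[symmetric] gdef[symmetric])
  finally have eg: "e * g = g" .
  have ey: "e * y = y" if yg0: "y \<in> pid g" for y
  proof -
    obtain r where "y = r * g" using yg0 by blast
    then show ?thesis using eg by (metis mult.left_commute)
  qed
  define h where "h = (\<lambda>r::nat. p + \<iota> (of_nat r) * q)"
  define D where "D = (\<lambda>n::nat. {y \<in> pid g. (\<Prod>i<n. h i) * y = 0})"
  have Did: "is_ideal (D n)" for n
    unfolding D_def is_ideal_def
  proof (intro conjI ballI allI impI)
    show "0 \<in> {y \<in> pid g. prod h {..<n} * y = 0}" using ideal_0[OF ideal_pid] by simp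
  next
    fix x y assume x: "x \<in> {y \<in> pid g. prod h {..<n} * y = 0}" and y: "y \<in> {y \<in> pid g. prod h {..<n} * y = 0}"
    have "x + y \<in> pid g" using x y ideal_add[OF ideal_pid, of x g y] by blast
    moreover have "prod h {..<n} * (x + y) = 0" using x y by (simp add: distrib_left)
    ultimately show "x + y \<in> {y \<in> pid g. prod h {..<n} * y = 0}" by blast
  next
    fix r x assume x: "x \<in> {y \<in> pid g. prod h {..<n} * y = 0}"
    have "r * x \<in> pid g" using x ideal_mult[OF ideal_pid, of x g r] by blast
    moreover have "prod h {..<n} * (r * x) = 0" using x by (simp add: mult.left_commute)
    ultimately show "r * x \<in> {y \<in> pid g. prod h {..<n} * y = 0}" by blast
  qed
  have lin: "Vector_Spaces.linear (alg_scale \<iota>) (alg_scale \<iota>) (\<lambda>y. c * y)" for c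
    unfolding Vector_Spaces.linear_iff using vs by (simp add: algebra_simps)
  have kern: "\<exists>y \<in> pid g. y \<noteq> 0 \<and> h r * y = 0" for r
  proof (rule ccontr)
    assume nk: "\<not> (\<exists>y\<in>pid g. y \<noteq> 0 \<and> h r * y = 0)"
    have inj: "inj_on (\<lambda>y. h r * y) (span (pid g))"
    proof (rule inj_onI)
      fix y1 y2 assume y1: "y1 \<in> span (pid g)" and y2: "y2 \<in> span (pid g)" and e: "h r * y1 = h r * y2"
      have sp: "span (pid g) = pid g" by (rule ideal_span[OF ideal_pid])
      have "y1 \<in> pid g" "y2 \<in> pid g" using y1 y2 unfolding sp by auto
      then have "y1 - y2 \<in> pid g" by (rule ideal_diff[OF ideal_pid])
      moreover have "h r * (y1 - y2) = 0" using e by (simp add: algebra_simps)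
      ultimately show "y1 = y2" using nk by auto
    qed
    have d: "dim ((\<lambda>y. h r * y) ` pid g) = dim (pid g)"
      by (rule pr.dim_image_eq[OF lin inj])
    have im: "(\<lambda>y. h r * y) ` pid g = pid (h r * g)"
    proof (intro set_eqI iffI)
      fix z assume "z \<in> (\<lambda>y. h r * y) ` pid g"
      then obtain t where "z = h r * (t * g)" by blast
      then have "z = t * (h r * g)" by (simp add: mult.left_commute)
      then show "z \<in> pid (h r * g)" by blast
    next
      fix z assume "z \<in> pid (h r * g)"
      then obtain t where "z = t * (h r * g)" by blast
      then have "z = h r * (t * g)" by (simp add: mult.left_commute)
      moreover have "t * g \<in> pid g" by blast
      ultimately show "z \<in> (\<lambda>y. h r * y) ` pid g" by blast
    qed
    have sub: "pid (h r * g) \<subseteq> pid g"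
      by (rule pid_sub[OF ideal_pid], rule ideal_mult[OF ideal_pid pid_mem])
    have "pid (h r * g) = pid g"
      using ideal_eq_dim[OF ideal_pid ideal_pid sub] d im by simp
    then have "g \<in> pid (h r * g)" using pid_mem by blast
    then obtain \<beta> where "g = \<beta> * (h r * g)" by auto
    then have "g = \<beta> * (v + \<iota> (of_nat r) * w)" using v w by (simp add: h_def algebra_simps)
    then show False using H by blast
  qed
  have prodlem: "(\<Prod>i<n. h i) * y = \<iota> (\<Prod>i<n. (of_nat i - of_nat r)) * q ^ n * y"
    if hr: "h r * y = 0" for r y n
  proof (induction n)
    case 0 then show ?case by simp
  next
    case (Suc n)
    have py: "p * y = - (\<iota> (of_nat r) * q * y)" using hr by (simp add: h_def algebra_simps eq_neg_iff_add_eq_0)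
    have hn: "h n * y = \<iota> (of_nat n - of_nat r) * q * y"
      by (simp add: h_def algebra_simps py idiff)
    have "(\<Prod>i<Suc n. h i) * y = h n * ((\<Prod>i<n. h i) * y)" by (simp add: algebra_simps)
    also have "\<dots> = \<iota> (\<Prod>i<n. (of_nat i - of_nat r)) * q ^ n * (h n * y)"
      using Suc by (simp add: algebra_simps)
    also have "\<dots> = \<iota> (\<Prod>i<n. (of_nat i - of_nat r)) * q ^ n * (\<iota> (of_nat n - of_nat r) * q * y)"
      using hn by (simp only:)
    also have "\<dots> = \<iota> ((\<Prod>i<n. (of_nat i - of_nat r)) * (of_nat n - of_nat r)) * q ^ Suc n * y"
      by (simp only: imult power_Suc mult_ac)
    also have "\<dots> = \<iota> (\<Prod>i<Suc n. (of_nat i - of_nat r)) * q ^ Suc n * y"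
      by (simp only: prod.lessThan_Suc)
    finally show ?case .
  qed
  have epow: "y = (b - a * \<iota> (of_nat r)) ^ n * q ^ n * y"
    if yg: "y \<in> pid g" and hr: "h r * y = 0" for y r n
  proof (induction n)
    case 0 then show ?case by simp
  next
    case (Suc n)
    have py: "p * y = - (\<iota> (of_nat r) * q * y)" using hr by (simp add: h_def algebra_simps eq_neg_iff_add_eq_0)
    have e1: "e * y = (b - a * \<iota> (of_nat r)) * q * y"
      by (simp add: e_def algebra_simps py)
    have "y = e * y" using ey[OF yg] by simp
    also have "\<dots> = e * ((b - a * \<iota> (of_nat r)) ^ n * q ^ n * y)" using Suc by simp
    also have "\<dots> = (b - a * \<iota> (of_nat r)) ^ n * q ^ n * (e * y)" by (simp add: algebra_simps)
    also have "\<dots> = (b - a * \<iota> (of_nat r)) ^ n * q ^ n * ((b - a * \<iota> (of_nat r)) * q * y)"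
      using e1 by (simp only:)
    also have "\<dots> = (b - a * \<iota> (of_nat r)) ^ Suc n * q ^ Suc n * y" by (simp only: power_Suc mult_ac)
    finally show ?case .
  qed
  have strict: "dim (D n) < dim (D (Suc n))" for n
  proof -
    have sub: "D n \<subseteq> D (Suc n)" unfolding D_def by (auto simp: algebra_simps)
    obtain y where y: "y \<in> pid g" "y \<noteq> 0" "h n * y = 0" using kern by blast
    have "(\<Prod>i<Suc n. h i) * y = (\<Prod>i<n. h i) * (h n * y)" by (simp add: mult_ac)
    then have yS: "y \<in> D (Suc n)" unfolding D_def using y by simp
    have yn: "y \<notin> D n"
    proof
      assume "y \<in> D n"
      then have "(\<Prod>i<n. h i) * y = 0" unfolding D_def by simp
      then have z: "\<iota> (\<Prod>i<n. (of_nat i - of_nat n :: 'k)) * (q ^ n * y) = 0"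
        using prodlem[OF y(3), of n] by (simp add: mult.assoc)
      have P: "(\<Prod>i<n. (of_nat i - of_nat n :: 'k)) \<noteq> 0"
      proof -
        have "of_nat i - of_nat n \<noteq> (0::'k)" if "i < n" for i
        proof
          assume "of_nat i - of_nat n = (0::'k)"
          then have "(of_nat i :: 'k) = of_nat n" by simp
          then have "i = n" using dist by (simp add: inj_def)
          then show False using that by simp
        qed
        then show ?thesis by (simp add: prod_zero_iff)
      qed
      have "q ^ n * y = (\<iota> (inverse (\<Prod>i<n. (of_nat i - of_nat n :: 'k))) * \<iota> (\<Prod>i<n. (of_nat i - of_nat n :: 'k))) * (q ^ n * y)"
        by (simp only: iinv[OF P] mult_1)
      also have "\<dots> = 0" by (simp only: mult.assoc z mult_zero_right)
      finally have qy: "q ^ n * y = 0" .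
      have "y = (b - a * \<iota> (of_nat n)) ^ n * q ^ n * y" by (rule epow[OF y(1) y(3)])
      also have "\<dots> = (b - a * \<iota> (of_nat n)) ^ n * (q ^ n * y)" by (simp only: mult.assoc)
      also have "\<dots> = 0" by (simp only: qy mult_zero_right)
      finally show False using y(2) by contradiction
    qed
    have "span (D n) \<subset> span (D (Suc n))" using sub yS yn Did by auto
    then show ?thesis by (rule fd.dim_psubset)
  qed
  have ge: "n \<le> dim (D n)" for n
  proof (induction n)
    case (Suc n) then show ?case using strict[of n] by linarith
  qed simp
  show False using ge[of "Suc fd.dimension"] dim_bound[of "D (Suc fd.dimension)"] by linarith
qed

end

theorem theorem3p1:
  fixes \<iota>A :: "'k::field_char_0 \<Rightarrow> 'a::comm_ring_1"
    and \<iota>B :: "'k \<Rightarrow> 'b::comm_ring_1"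
    and M :: "'a set"
    and f :: "'a \<Rightarrow> 'b"
  assumes "gorenstein \<iota>A M"
    and "\<not> principal_ideal_algebra \<iota>A"
    and "principal_ideal_algebra \<iota>B"
    and "alg_hom \<iota>A \<iota>B f"
  shows "(\<forall>a\<in>socle M. f a = 0) \<and> \<not> inj f"
proof -
  have locA: "local_algebra \<iota>A M" and dsoc: "vector_space.dim (alg_scale \<iota>A) (socle M) = 1"
    using assms(1) unfolding gorenstein_def by auto
  have finA: "fin_dim_algebra \<iota>A" and maxM: "maximal_ideal M" and uniq: "\<forall>N. maximal_ideal N \<longrightarrow> N = M"
    using locA unfolding local_algebra_def by auto
  have kA: "kalg \<iota>A"
  proof (rule kalg.intro)
    show "is_ring_hom \<iota>A" using finA unfolding fin_dim_algebra_def k_algebra_def by blast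
    show "\<exists>S. finite S \<and> module.span (alg_scale \<iota>A) S = UNIV"
      using finA unfolding fin_dim_algebra_def by blast
  qed
  have lA: "localalg \<iota>A M"
    by (rule localalg.intro[OF kA]) (unfold localalg_axioms_def, use maxM uniq in blast)
  have gA: "goralg \<iota>A M"
    by (rule goralg.intro[OF lA]) (unfold goralg_axioms_def, rule dsoc)
  interpret A: goralg \<iota>A M by (rule gA)
  have finB: "fin_dim_algebra \<iota>B" and pidB: "\<forall>I::'b set. is_ideal I \<longrightarrow> principal_ideal I"
    using assms(3) unfolding principal_ideal_algebra_def by auto
  have kB: "kalg \<iota>B"
  proof (rule kalg.intro)
    show "is_ring_hom \<iota>B" using finB unfolding fin_dim_algebra_def k_algebra_def by blast
    show "\<exists>S. finite S \<and> module.span (alg_scale \<iota>B) S = UNIV"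
      using finB unfolding fin_dim_algebra_def by blast
  qed
  interpret B: kalg \<iota>B by (rule kB)
  have fh: "is_ring_hom f" and fi: "\<And>c. f (\<iota>A c) = \<iota>B c"
    using assms(4) unfolding alg_hom_def by auto
  have dist: "inj (of_nat :: nat \<Rightarrow> 'k)" by (simp add: inj_def)
  have claim: "\<forall>a\<in>socle M. f a = 0"
  proof (rule ccontr)
    assume "\<not> (\<forall>a\<in>socle M. f a = 0)"
    then obtain a where a: "a \<in> socle M" "f a \<noteq> 0" by auto
    then obtain c where "a = \<iota>A c * A.sg" using A.sg(2) by auto
    then have "f a = \<iota>B c * f A.sg" using hom_mult[OF fh] fi by simp
    then have fs: "f A.sg \<noteq> 0" using a by auto
    have injf: "inj f" by (rule A.inj_of_soc[OF fh fs])
    obtain x where x: "x \<in> M" and mx: "\<forall>y. y \<in> M \<longrightarrow> B.dim (B.pid (f y)) \<le> B.dim (B.pid (f x))"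
      using ex_has_greatest_nat[of "\<lambda>y. y \<in> M" 0 "\<lambda>y. B.dim (B.pid (f y))" "Suc B.fd.dimension"]
        A.ideal_0[OF A.Mideal] B.dim_bound by blast
    have cover: "\<exists>r. f y = r * f x" if y: "y \<in> M" for y
    proof -
      let ?I = "{\<beta> * f x + \<gamma> * f y | \<beta> \<gamma>. True}"
      have Iid: "is_ideal ?I"
        unfolding is_ideal_def
      proof (intro conjI ballI allI impI)
        show "0 \<in> ?I" by (rule CollectI, rule exI[of _ 0], rule exI[of _ 0]) simp
      next
        fix u v assume "u \<in> ?I" "v \<in> ?I"
        then obtain b1 c1 b2 c2 where "u = b1 * f x + c1 * f y" "v = b2 * f x + c2 * f y" by blast
        then have "u + v = (b1 + b2) * f x + (c1 + c2) * f y" by (simp add: algebra_simps)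
        then show "u + v \<in> ?I" by blast
      next
        fix r u assume "u \<in> ?I"
        then obtain b1 c1 where "u = b1 * f x + c1 * f y" by blast
        then have "r * u = (r * b1) * f x + (r * c1) * f y" by (simp add: algebra_simps)
        then show "r * u \<in> ?I" by blast
      qed
      then obtain g where g: "?I = B.pid g" using pidB unfolding principal_ideal_def by blast
      have "f x \<in> ?I" by (rule CollectI, rule exI[of _ 1], rule exI[of _ 0]) simp
      then obtain p where p: "f x = p * g" using g by blast
      have "f y \<in> ?I" by (rule CollectI, rule exI[of _ 0], rule exI[of _ 1]) simp
      then obtain q where q: "f y = q * g" using g by blast
      have "g \<in> ?I" using g B.pid_mem by blast
      then obtain a' b' where ab: "g = a' * f x + b' * f y" by blast
      obtain c \<beta> where cb: "g = \<beta> * (f x + \<iota>B c * f y)"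
        using B.key[OF dist p q ab] by blast
      define z where "z = x + \<iota>A c * y"
      have zM: "z \<in> M" unfolding z_def
        using A.ideal_add[OF A.Mideal x A.ideal_mult[OF A.Mideal y]] .
      have fz: "f z = f x + \<iota>B c * f y"
        unfolding z_def using hom_add[OF fh] hom_mult[OF fh] fi by simp
      have gz: "g = \<beta> * f z" using cb fz by simp
      have s1: "B.pid g \<subseteq> B.pid (f z)"
        by (rule B.pid_sub[OF B.ideal_pid]) (use gz in blast)
      have s2: "B.pid (f x) \<subseteq> B.pid g"
        by (rule B.pid_sub[OF B.ideal_pid]) (use p in blast)
      have dle: "B.dim (B.pid (f z)) \<le> B.dim (B.pid (f x))" using mx zM by blast
      have s3: "B.pid (f x) \<subseteq> B.pid (f z)" using s2 s1 by (rule subset_trans)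
      have eq: "B.pid (f x) = B.pid (f z)"
        by (rule B.ideal_eq_dim[OF B.ideal_pid B.ideal_pid s3 dle])
      have "f y \<in> B.pid g" using q by blast
      then have "f y \<in> B.pid (f x)" using s1 eq by blast
      then show ?thesis by blast
    qed
    have ann: "\<forall>a. a * x = 0 \<longrightarrow> a \<in> socle M"
    proof (intro allI impI)
      fix a assume ax: "a * x = 0"
      show "a \<in> socle M" unfolding socle_def
      proof (intro CollectI ballI)
        fix m assume "m \<in> M"
        then obtain r where r: "f m = r * f x" using cover by blast
        have "f (a * m) = r * f (a * x)" using r hom_mult[OF fh] by (simp add: mult_ac)
        also have "\<dots> = f 0" using ax hom_0[OF fh] by simp
        finally show "a * m = 0" using injf by (simp add: inj_def)
      qed
    qed
    have "A.pid x = M" by (rule A.pid_eq_M[OF x ann])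
    then have "\<forall>I::'a set. is_ideal I \<longrightarrow> principal_ideal I"
      using A.M_pid_principal by metis
    then have "principal_ideal_algebra \<iota>A" using finA unfolding principal_ideal_algebra_def by blast
    then show False using assms(2) by contradiction
  qed
  have "\<not> inj f"
  proof
    assume "inj f"
    moreover have "f A.sg = f 0" using claim A.sg_soc hom_0[OF fh] by simp
    ultimately show False using A.sg(1) by (simp add: inj_def)
  qed
  then show ?thesis using claim by blast
qed

end
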